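(* Let $p,q\geq1$ be integers, $\alpha_0=\arctan\sqrt{q/p}$ and $P_0=(\alpha_0,\alpha_0)$. Let $(\vartheta(s),\alpha(s))$ be a trajectory of the differential system $$\dot\vartheta=3\sin\vartheta\cos\vartheta\sin(\alpha-\vartheta),\qquad \dot\alpha=q\cos\alpha\cos\vartheta-p\sin\alpha\sin\vartheta,$$ and suppose that for some $s_0$ one has $0<\vartheta(s_0)<\pi/2$ and $\vartheta(s_0)-\pi/2\leq\alpha(s_0)\leq\vartheta(s_0)+\pi/2$. Then $\lim_{s\to+\infty}(\vartheta(s),\alpha(s))=P_0$. *)

theory Defs
  imports "HOL-Analysis.Analysis"
begin

end

theory Submission
  imports Defs
begin
definition lip :: "(real \<Rightarrow> real) \<Rightarrow> bool" where
  "lip f \<longleftrightarrow> (\<exists>K. \<forall>x y. \<bar>f x - f y\<bar> \<le> K * \<bar>x - y\<bar>)"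
definition lipb :: "(real \<Rightarrow> real) \<Rightarrow> bool" where
  "lipb f \<longleftrightarrow> lip f \<and> (\<exists>B. \<forall>x. \<bar>f x\<bar> \<le> B)"

lemma sin_lip: fixes x y :: real shows "\<bar>sin x - sin y\<bar> \<le> \<bar>x - y\<bar>"
proof -
  have "\<bar>sin x - sin y\<bar> = 2 * \<bar>sin ((x - y) / 2)\<bar> * \<bar>cos ((x + y) / 2)\<bar>"
    by (simp add: sin_diff_sin abs_mult)
  also have "\<dots> \<le> 2 * \<bar>(x - y) / 2\<bar> * 1"
    by (intro mult_mono abs_sin_x_le_abs_x) auto
  finally show ?thesis by simp
qed

lemma cos_lip: fixes x y :: real shows "\<bar>cos x - cos y\<bar> \<le> \<bar>x - y\<bar>"
proof -
  have "\<bar>cos x - cos y\<bar> = 2 * \<bar>sin ((x + y) / 2)\<bar> * \<bar>sin ((y - x) / 2)\<bar>"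
    by (simp add: cos_diff_cos abs_mult)
  also have "\<dots> \<le> 2 * 1 * \<bar>(y - x) / 2\<bar>"
    by (intro mult_mono abs_sin_x_le_abs_x) auto
  finally show ?thesis by simp
qed

lemma lip_add: "lip f \<Longrightarrow> lip g \<Longrightarrow> lip (\<lambda>x. f x + g x)"
  unfolding lip_def
proof (elim exE)
  fix K1 K2 assume 1: "\<forall>x y. \<bar>f x - f y\<bar> \<le> K1 * \<bar>x - y\<bar>" and 2: "\<forall>x y. \<bar>g x - g y\<bar> \<le> K2 * \<bar>x - y\<bar>"
  show "\<exists>K. \<forall>x y. \<bar>f x + g x - (f y + g y)\<bar> \<le> K * \<bar>x - y\<bar>"
  proof (intro exI allI)
    fix x y
    have "\<bar>f x + g x - (f y + g y)\<bar> \<le> \<bar>f x - f y\<bar> + \<bar>g x - g y\<bar>" by simp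
    also have "\<dots> \<le> (K1 + K2) * \<bar>x - y\<bar>" using 1 2 by (simp add: algebra_simps add_mono)
    finally show "\<bar>f x + g x - (f y + g y)\<bar> \<le> (K1 + K2) * \<bar>x - y\<bar>" .
  qed
qed

lemma lip_neg: assumes "lip f" shows "lip (\<lambda>x. - f x)"
proof -
  obtain K where K: "\<And>x y. \<bar>f x - f y\<bar> \<le> K * \<bar>x - y\<bar>" using assms unfolding lip_def by blast
  have "\<bar>- f x - - f y\<bar> \<le> K * \<bar>x - y\<bar>" for x y using K[of x y] by linarith
  then show ?thesis unfolding lip_def by blast
qed

lemma lip_diff: "lip f \<Longrightarrow> lip g \<Longrightarrow> lip (\<lambda>x. f x - g x)"
  using lip_add[OF _ lip_neg, of f g] by simp

lemma lipb_add: assumes "lipb f" "lipb g" shows "lipb (\<lambda>x. f x + g x)"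
proof -
  obtain B1 B2 where "\<And>x. \<bar>f x\<bar> \<le> B1" "\<And>x. \<bar>g x\<bar> \<le> B2" using assms unfolding lipb_def by blast
  then have "\<bar>f x + g x\<bar> \<le> B1 + B2" for x using abs_triangle_ineq[of "f x" "g x"] by (smt (verit))
  then show ?thesis using assms lip_add unfolding lipb_def by blast
qed

lemma lipb_diff: assumes "lipb f" "lipb g" shows "lipb (\<lambda>x. f x - g x)"
proof -
  obtain B1 B2 where "\<And>x. \<bar>f x\<bar> \<le> B1" "\<And>x. \<bar>g x\<bar> \<le> B2" using assms unfolding lipb_def by blast
  then have "\<bar>f x - g x\<bar> \<le> B1 + B2" for x using abs_triangle_ineq4[of "f x" "g x"] by (smt (verit))
  then show ?thesis using assms lip_diff unfolding lipb_def by blast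
qed

lemma lipb_const: "lipb (\<lambda>x. c)"
  unfolding lipb_def lip_def by (auto intro!: exI[of _ 0] exI[of _ "\<bar>c\<bar>"])

lemma lipb_mult: assumes "lipb f" "lipb g" shows "lipb (\<lambda>x. f x * g x)"
proof -
  obtain K1 B1 where 1: "\<And>x y. \<bar>f x - f y\<bar> \<le> K1 * \<bar>x - y\<bar>" "\<And>x. \<bar>f x\<bar> \<le> B1"
    using assms(1) unfolding lipb_def lip_def by blast
  obtain K2 B2 where 2: "\<And>x y. \<bar>g x - g y\<bar> \<le> K2 * \<bar>x - y\<bar>" "\<And>x. \<bar>g x\<bar> \<le> B2"
    using assms(2) unfolding lipb_def lip_def by blast
  have B1: "0 \<le> B1" using 1(2)[of 0] by simp
  have B2: "0 \<le> B2" using 2(2)[of 0] by simp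
  have "\<bar>f x * g x - f y * g y\<bar> \<le> (B1 * K2 + B2 * K1) * \<bar>x - y\<bar>" for x y
  proof -
    have "f x * g x - f y * g y = f x * (g x - g y) + g y * (f x - f y)" by (simp add: algebra_simps)
    hence "\<bar>f x * g x - f y * g y\<bar> \<le> \<bar>f x\<bar> * \<bar>g x - g y\<bar> + \<bar>g y\<bar> * \<bar>f x - f y\<bar>"
      by (metis abs_mult abs_triangle_ineq)
    also have "\<dots> \<le> B1 * (K2 * \<bar>x - y\<bar>) + B2 * (K1 * \<bar>x - y\<bar>)"
      by (intro add_mono mult_mono 1 2) (auto simp: B1 B2)
    finally show ?thesis by (simp add: algebra_simps)
  qed
  moreover have "\<bar>f x * g x\<bar> \<le> B1 * B2" for x
    unfolding abs_mult by (intro mult_mono 1 2) (auto simp: B1)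
  ultimately show ?thesis unfolding lipb_def lip_def by blast
qed

lemma lipb_power: "lipb f \<Longrightarrow> lipb (\<lambda>x. f x ^ n)"
proof (induction n)
  case 0 then show ?case using lipb_const[of 1] by simp
next
  case (Suc n) then show ?case using lipb_mult[of f "\<lambda>x. f x ^ n"] by (simp only: power_Suc)
qed

lemma lipb_sin: assumes "lip f" shows "lipb (\<lambda>x. sin (f x))"
proof -
  obtain K where K: "\<And>x y. \<bar>f x - f y\<bar> \<le> K * \<bar>x - y\<bar>" using assms unfolding lip_def by blast
  have "\<bar>sin (f x) - sin (f y)\<bar> \<le> K * \<bar>x - y\<bar>" for x y using sin_lip[of "f x" "f y"] K[of x y] by linarith
  moreover have "\<forall>x. \<bar>sin (f x)\<bar> \<le> 1" by simp
  ultimately show ?thesis unfolding lipb_def lip_def by blast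
qed

lemma lipb_cos: assumes "lip f" shows "lipb (\<lambda>x. cos (f x))"
proof -
  obtain K where K: "\<And>x y. \<bar>f x - f y\<bar> \<le> K * \<bar>x - y\<bar>" using assms unfolding lip_def by blast
  have "\<bar>cos (f x) - cos (f y)\<bar> \<le> K * \<bar>x - y\<bar>" for x y using cos_lip[of "f x" "f y"] K[of x y] by linarith
  moreover have "\<forall>x. \<bar>cos (f x)\<bar> \<le> 1" by simp
  ultimately show ?thesis unfolding lipb_def lip_def by blast
qed

lemma lip_deriv_bound:
  assumes "\<And>x. (f has_real_derivative f' x) (at x)" "\<And>x. \<bar>f' x\<bar> \<le> M"
  shows "lip f"
proof -
  have *: "\<bar>f x - f y\<bar> \<le> M * \<bar>x - y\<bar>" if yx: "y < x" for x y
  proof -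
    obtain z where z: "f x - f y = (x - y) * f' z" using MVT2[of y x f f'] yx assms(1) by auto
    have "\<bar>f x - f y\<bar> = \<bar>x - y\<bar> * \<bar>f' z\<bar>" unfolding z abs_mult ..
    also have "\<dots> \<le> \<bar>x - y\<bar> * M" by (rule mult_left_mono) (use assms(2)[of z] in auto)
    finally show ?thesis by (simp only: mult.commute)
  qed
  have "\<bar>f x - f y\<bar> \<le> M * \<bar>x - y\<bar>" for x y
  proof (cases x y rule: linorder_cases)
    case less
    have "\<bar>f y - f x\<bar> \<le> M * \<bar>y - x\<bar>" using *[where x=y and y=x] less by blast
    moreover have "\<bar>f y - f x\<bar> = \<bar>f x - f y\<bar>" "\<bar>y - x\<bar> = \<bar>x - y\<bar>" by (rule abs_minus_commute)+
    ultimately show ?thesis by simp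
  next
    case equal then show ?thesis by simp
  next
    case greater then show ?thesis using * greater by blast
  qed
  then show ?thesis unfolding lip_def by blast
qed

lemma barbalat:
  fixes g g' :: "real \<Rightarrow> real"
  assumes lim: "(g \<longlongrightarrow> L) at_top"
    and der: "\<And>t. (g has_real_derivative g' t) (at t)"
    and lg: "lip g'"
  shows "(g' \<longlongrightarrow> 0) at_top"
proof -
  obtain K0 where K0: "\<And>x y. \<bar>g' x - g' y\<bar> \<le> K0 * \<bar>x - y\<bar>" using lg unfolding lip_def by blast
  define K where "K = max K0 1"
  have K: "\<bar>g' x - g' y\<bar> \<le> K * \<bar>x - y\<bar>" for x y
    using K0[of x y] unfolding K_def by (meson abs_ge_zero max.cobounded1 mult_right_mono order_trans)
  have Kpos: "K > 0" unfolding K_def by simp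
  have "\<forall>\<^sub>F t in at_top. \<bar>g' t\<bar> < e" if e: "e > 0" for e
  proof -
    define h where "h = e / (2 * K)"
    have hpos: "h > 0" using e Kpos by (simp add: h_def)
    have "\<forall>\<^sub>F t in at_top. dist (g t) L < e * h / 4"
      using tendstoD[OF lim, of "e * h / 4"] e hpos by simp
    then obtain T where T: "\<And>t. t \<ge> T \<Longrightarrow> \<bar>g t - L\<bar> < e * h / 4"
      by (auto simp: eventually_at_top_linorder dist_real_def)
    have "\<bar>g' t\<bar> < e" if t: "t \<ge> T" for t
    proof (rule ccontr)
      assume "\<not> \<bar>g' t\<bar> < e"
      hence ge: "\<bar>g' t\<bar> \<ge> e" by simp
      obtain z where z: "t < z" "z < t + h" "g (t + h) - g t = (t + h - t) * g' z"
        using MVT2[of t "t + h" g g'] hpos der by auto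
      have "\<bar>z - t\<bar> \<le> h" using z by simp
      hence "K * \<bar>z - t\<bar> \<le> K * h" by (rule mult_left_mono) (use Kpos in simp)
      hence "\<bar>g' z - g' t\<bar> \<le> K * h" using K[of z t] by linarith
      also have "K * h = e / 2" using Kpos by (simp add: h_def)
      finally have "\<bar>g' z\<bar> \<ge> e / 2" using ge by linarith
      hence "\<bar>g (t + h) - g t\<bar> \<ge> h * (e / 2)" using z(3) hpos by (simp add: abs_mult)
      moreover have "\<bar>g (t + h) - g t\<bar> < e * h / 2" using T[of t] T[of "t + h"] t hpos by linarith
      ultimately show False by (simp add: algebra_simps)
    qed
    then show ?thesis unfolding eventually_at_top_linorder by blast
  qed
  then show ?thesis by (simp add: tendsto_iff dist_real_def)
qed

lemma trap:
  fixes f :: "real \<Rightarrow> real"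
  assumes cont: "\<And>x. isCont f x" and la: "l < f a" and ar: "f a < r"
    and H: "\<And>t. a \<le> t \<Longrightarrow> (\<forall>x\<in>{a..t}. l \<le> f x \<and> f x \<le> r) \<Longrightarrow> l < f t \<and> f t < r"
    and t: "a \<le> t"
  shows "l < f t \<and> f t < r"
proof (rule ccontr)
  assume bad: "\<not> (l < f t \<and> f t < r)"
  define S where "S = {a..t} \<inter> ({x. f x \<le> l} \<union> {x. r \<le> f x})"
  have cf: "continuous_on UNIV f" by (simp add: cont continuous_at_imp_continuous_on)
  have "closed S" unfolding S_def
    by (intro closed_Int closed_Un closed_atLeastAtMost closed_Collect_le cf continuous_on_const)
  moreover have "t \<in> S" using bad t unfolding S_def by auto
  hence "S \<noteq> {}" by auto
  moreover have "bdd_below S" unfolding S_def by (rule bdd_belowI[of _ a]) auto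
  ultimately have mS: "Inf S \<in> S" by (rule closed_contains_Inf[rotated 2])
  define m where "m = Inf S"
  have mlow: "m \<le> x" if "x \<in> S" for x
    unfolding m_def using that \<open>bdd_below S\<close> by (rule cInf_lower)
  have m: "a \<le> m" "m \<le> t" "f m \<le> l \<or> r \<le> f m" using mS unfolding S_def m_def by auto
  have inside: "l < f x \<and> f x < r" if "a \<le> x" "x < m" for x
    using mlow[of x] that m unfolding S_def by force
  have ma: "m \<noteq> a" using m(3) la ar by auto
  have "l \<le> f m"
  proof (rule ccontr)
    assume "\<not> l \<le> f m"
    then obtain x where x: "a \<le> x" "x \<le> m" "f x = l"
      using IVT2[of f m l a] la m cont by force
    have "x \<in> S" using x m unfolding S_def by auto
    then have "m \<le> x" by (rule mlow)
    then show False using x \<open>\<not> l \<le> f m\<close> by auto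
  qed
  moreover have "f m \<le> r"
  proof (rule ccontr)
    assume "\<not> f m \<le> r"
    then obtain x where x: "a \<le> x" "x \<le> m" "f x = r"
      using IVT[of f a r m] ar m cont by force
    have "x \<in> S" using x m unfolding S_def by auto
    then have "m \<le> x" by (rule mlow)
    then show False using x \<open>\<not> f m \<le> r\<close> by auto
  qed
  ultimately have "\<forall>x\<in>{a..m}. l \<le> f x \<and> f x \<le> r"
    using inside by (metis atLeastAtMost_iff less_eq_real_def not_le)
  then have "l < f m \<and> f m < r" using H m(1) by blast
  then show False using m(3) by auto
qed

lemma near_right:
  fixes f :: "real \<Rightarrow> real"
  assumes "isCont f x" "l < f x" "f x < r"
  shows "\<exists>d>0. \<forall>h. 0 < h \<and> h < d \<longrightarrow> l < f (x + h) \<and> f (x + h) < r"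
proof -
  have "continuous (at x) f" using assms(1) by simp
  then obtain d where d: "d > 0" "\<And>x'. dist x' x < d \<Longrightarrow> dist (f x') (f x) < min (f x - l) (r - f x)"
    using iffD1[OF continuous_at_eps_delta, rule_format, of x f "min (f x - l) (r - f x)"] assms(2,3) by auto
  show ?thesis
  proof (intro exI[of _ d] conjI allI impI)
    fix h assume h: "0 < h \<and> h < d"
    have "dist (f (x + h)) (f x) < min (f x - l) (r - f x)" using d(2)[of "x + h"] h by (simp add: dist_real_def)
    then show "l < f (x + h)" "f (x + h) < r" by (auto simp: dist_real_def)
  qed (use d in auto)
qed

lemma mono_conv:
  fixes f :: "real \<Rightarrow> real"
  assumes mono: "\<And>x y. a \<le> x \<Longrightarrow> x \<le> y \<Longrightarrow> f x \<le> f y" and bd: "\<And>x. f x \<le> B"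
  shows "\<exists>L. (f \<longlongrightarrow> L) at_top"
proof -
  define L where "L = Sup (f ` {a..})"
  have ne: "f ` {a..} \<noteq> {}" by auto
  have bda: "bdd_above (f ` {a..})" using bd by (intro bdd_aboveI[of _ B]) auto
  have up: "f x \<le> L" if "a \<le> x" for x unfolding L_def using that bda by (auto intro: cSup_upper)
  have "\<forall>\<^sub>F t in at_top. dist (f t) L < e" if e: "e > 0" for e
  proof -
    have "L - e < L" using e by simp
    then obtain x0 where x0: "x0 \<ge> a" "L - e < f x0" unfolding L_def using less_cSup_iff[OF ne bda] by auto
    have "dist (f t) L < e" if "t \<ge> x0" for t
      using mono[of x0 t] up[of t] x0 that by (auto simp: dist_real_def)
    then show ?thesis unfolding eventually_at_top_linorder by blast
  qed
  then show ?thesis by (auto simp: tendsto_iff)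
qed

lemma poly_id:
  fixes S C U V :: real and a b :: nat
  assumes sc: "S^2 + C^2 = 1"
  shows "real (Suc a) * S ^ a * (C * (3 * S * C * U)) * C ^ Suc b * V ^ 3
   + S ^ Suc a * (real (Suc b) * C ^ b * (- S * (3 * S * C * U))) * V ^ 3
   + S ^ Suc a * C ^ Suc b * (3 * V ^ 2 * (- U * ((real (Suc a) * (V * C - U * S) * C - real (Suc b) * (U * C + V * S) * S) - 3 * S * C * U)))
   = 3 * (real (Suc b) + real (Suc a) + 3) * S ^ (Suc a + 1) * C ^ (Suc b + 1) * U ^ 2 * V ^ 2"
proof -
  define X Y where "X = S^a" "Y = C^b"
  have "real (Suc a) * X * (C * (3 * S * C * U)) * (C * Y) * V ^ 3
   + (S * X) * (real (Suc b) * Y * (- S * (3 * S * C * U))) * V ^ 3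
   + (S * X) * (C * Y) * (3 * V ^ 2 * (- U * ((real (Suc a) * (V * C - U * S) * C - real (Suc b) * (U * C + V * S) * S) - 3 * S * C * U)))
   = 3 * (real (Suc b) + real (Suc a) + 3) * (S*S*X) * (C*C*Y) * U ^ 2 * V ^ 2"
    by (simp add: of_nat_Suc algebra_simps power2_eq_square power3_eq_cube)
  then show ?thesis by (simp add: X_Y_def power_Suc algebra_simps)
qed
lemma pow_le_self: "0 \<le> (x::real) \<Longrightarrow> x \<le> 1 \<Longrightarrow> x ^ Suc n \<le> x"
proof -
  assume x: "0 \<le> x" "x \<le> 1"
  have "x * x ^ n \<le> x * 1" by (intro mult_left_mono power_le_one) (use x in auto)
  then show ?thesis by simp
qed

lemma W_le:
  fixes x y z :: real
  assumes "0 \<le> x" "x \<le> 1" "0 \<le> y" "y \<le> 1" "0 \<le> z" "z \<le> 1"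
  shows "x ^ Suc a * y ^ Suc b * z ^ 3 \<le> x" "x ^ Suc a * y ^ Suc b * z ^ 3 \<le> y"
    "x ^ Suc a * y ^ Suc b * z ^ 3 \<le> z"
proof -
  have a: "x ^ Suc a \<le> x" "x ^ Suc a \<le> 1" "0 \<le> x ^ Suc a" using pow_le_self[of x a] assms by (auto intro: power_le_one)
  have b: "y ^ Suc b \<le> y" "y ^ Suc b \<le> 1" "0 \<le> y ^ Suc b" using pow_le_self[of y b] assms by (auto intro: power_le_one)
  have c: "z ^ Suc 2 \<le> z" "z ^ 3 \<le> 1" "0 \<le> z ^ 3" using pow_le_self[of z 2] assms by (auto intro: power_le_one)
  have c': "z ^ 3 \<le> z" using c(1) by (simp add: numeral_3_eq_3)
  have "x ^ Suc a * y ^ Suc b * z ^ 3 \<le> x * 1 * 1" by (intro mult_mono) (use a b c assms in auto)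
  then show "x ^ Suc a * y ^ Suc b * z ^ 3 \<le> x" by simp
  have "x ^ Suc a * y ^ Suc b * z ^ 3 \<le> 1 * y * 1" by (intro mult_mono) (use a b c assms in auto)
  then show "x ^ Suc a * y ^ Suc b * z ^ 3 \<le> y" by simp
  have "x ^ Suc a * y ^ Suc b * z ^ 3 \<le> 1 * 1 * z" by (intro mult_mono) (use a b c c' assms in auto)
  then show "x ^ Suc a * y ^ Suc b * z ^ 3 \<le> z" by simp
qed

lemma abs3_le1: "\<bar>sin x * cos y * sin z\<bar> \<le> (1::real)"
  unfolding abs_mult by (intro mult_le_one) auto

theorem lemma4p10:
  fixes p q :: nat and \<theta> \<alpha> :: "real \<Rightarrow> real" and s\<^sub>0 :: real
  assumes "p \<ge> 1" and "q \<ge> 1"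
    and "\<And>s. (\<theta> has_real_derivative
           3 * sin (\<theta> s) * cos (\<theta> s) * sin (\<alpha> s - \<theta> s)) (at s)"
    and "\<And>s. (\<alpha> has_real_derivative
           real q * cos (\<alpha> s) * cos (\<theta> s) - real p * sin (\<alpha> s) * sin (\<theta> s)) (at s)"
    and "0 < \<theta> s\<^sub>0" and "\<theta> s\<^sub>0 < pi / 2"
    and "\<theta> s\<^sub>0 - pi / 2 \<le> \<alpha> s\<^sub>0" and "\<alpha> s\<^sub>0 \<le> \<theta> s\<^sub>0 + pi / 2"
  shows "((\<lambda>s. (\<theta> s, \<alpha> s)) \<longlongrightarrow>
           (arctan (sqrt (real q / real p)), arctan (sqrt (real q / real p)))) at_top"
proof -
  obtain a where qa: "q = Suc a" using assms(2) by (cases q) auto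
  obtain b where pb: "p = Suc b" using assms(1) by (cases p) auto
  define u where "u t = \<alpha> t - \<theta> t" for t
  define th' where "th' t = 3 * sin (\<theta> t) * cos (\<theta> t) * sin (\<alpha> t - \<theta> t)" for t
  define al' where "al' t = real q * cos (\<alpha> t) * cos (\<theta> t) - real p * sin (\<alpha> t) * sin (\<theta> t)" for t
  define W where "W t = sin (\<theta> t) ^ q * cos (\<theta> t) ^ p * cos (\<alpha> t - \<theta> t) ^ 3" for t
  define W' where "W' t = 3 * (real p + real q + 3) * sin (\<theta> t) ^ (q + 1) * cos (\<theta> t) ^ (p + 1)
      * sin (\<alpha> t - \<theta> t) ^ 2 * cos (\<alpha> t - \<theta> t) ^ 2" for t
  have dth: "(\<theta> has_real_derivative th' t) (at t)" for t unfolding th'_def by (rule assms(3))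
  have dal: "(\<alpha> has_real_derivative al' t) (at t)" for t unfolding al'_def by (rule assms(4))
  have du: "(u has_real_derivative (al' t - th' t)) (at t)" for t
    unfolding u_def[abs_def] by (intro derivative_intros dth dal)
  have cth: "isCont \<theta> t" for t using dth by (rule DERIV_isCont)
  have cu: "isCont u t" for t using du by (rule DERIV_isCont)
  have dW: "(W has_real_derivative W' t) (at t)" for t
  proof -
    have cy: "cos (\<alpha> t) = cos (\<alpha> t - \<theta> t) * cos (\<theta> t) - sin (\<alpha> t - \<theta> t) * sin (\<theta> t)"
      using cos_add[of "\<alpha> t - \<theta> t" "\<theta> t"] by simp
    have sy: "sin (\<alpha> t) = sin (\<alpha> t - \<theta> t) * cos (\<theta> t) + cos (\<alpha> t - \<theta> t) * sin (\<theta> t)"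
      using sin_add[of "\<alpha> t - \<theta> t" "\<theta> t"] by simp
    show ?thesis unfolding W_def[abs_def]
      apply (rule derivative_eq_intros refl dth dal | assumption)+
      unfolding W'_def th'_def al'_def cy sy qa pb
      apply (simp only: power_Suc diff_Suc_1)
      apply (simp add: algebra_simps power2_eq_square power3_eq_cube)
      done
  qed
  have th'b: "\<bar>th' t\<bar> \<le> 3" for t
    using abs3_le1[of "\<theta> t" "\<theta> t" "\<alpha> t - \<theta> t"] unfolding th'_def by (simp add: abs_mult)
  have al'b: "\<bar>al' t\<bar> \<le> real q + real p" for t
  proof -
    have "\<bar>cos (\<alpha> t)\<bar> * \<bar>cos (\<theta> t)\<bar> \<le> 1" by (intro mult_le_one) auto
    hence "real q * (\<bar>cos (\<alpha> t)\<bar> * \<bar>cos (\<theta> t)\<bar>) \<le> real q * 1" by (intro mult_left_mono) auto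
    hence "\<bar>real q * cos (\<alpha> t) * cos (\<theta> t)\<bar> \<le> real q" by (simp add: abs_mult mult.assoc)
    moreover have "\<bar>sin (\<alpha> t)\<bar> * \<bar>sin (\<theta> t)\<bar> \<le> 1" by (intro mult_le_one) auto
    hence "real p * (\<bar>sin (\<alpha> t)\<bar> * \<bar>sin (\<theta> t)\<bar>) \<le> real p * 1" by (intro mult_left_mono) auto
    hence "\<bar>real p * sin (\<alpha> t) * sin (\<theta> t)\<bar> \<le> real p" by (simp add: abs_mult mult.assoc)
    ultimately show ?thesis unfolding al'_def by linarith
  qed
  have lth: "lip \<theta>" by (rule lip_deriv_bound[OF dth th'b])
  have lal: "lip \<alpha>" by (rule lip_deriv_bound[OF dal al'b])
  have lu: "lip (\<lambda>t. \<alpha> t - \<theta> t)" by (rule lip_diff[OF lal lth])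
  have lW': "lip W'"
  proof -
    have "lipb W'" unfolding W'_def
      by (intro lipb_mult lipb_power lipb_const lipb_sin lipb_cos lth lu)
    then show ?thesis unfolding lipb_def by blast
  qed
  have lu': "lip (\<lambda>t. al' t - th' t)"
  proof -
    have "lipb (\<lambda>t. al' t - th' t)" unfolding al'_def th'_def
      by (intro lipb_diff lipb_mult lipb_power lipb_const lipb_sin lipb_cos lth lal lu)
    then show ?thesis unfolding lipb_def by blast
  qed
  obtain s1 where s1: "0 < \<theta> s1" "\<theta> s1 < pi / 2" "- (pi / 2) < u s1" "u s1 < pi / 2"
  proof -
    obtain d1 where d1: "d1 > 0" "\<And>h. 0 < h \<and> h < d1 \<Longrightarrow> 0 < \<theta> (s\<^sub>0 + h) \<and> \<theta> (s\<^sub>0 + h) < pi / 2"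
      using near_right[OF cth, of 0 s\<^sub>0 "pi / 2"] assms(5,6) by auto
    have u0: "- (pi / 2) \<le> u s\<^sub>0" "u s\<^sub>0 \<le> pi / 2" using assms(7,8) unfolding u_def by auto
    consider "- (pi / 2) < u s\<^sub>0 \<and> u s\<^sub>0 < pi / 2" | "u s\<^sub>0 = pi / 2" | "u s\<^sub>0 = - (pi / 2)"
      using u0 by linarith
    then show ?thesis
    proof cases
      case 1 then show ?thesis using that[of s\<^sub>0] assms(5,6) by auto
    next
      case 2
      have sc: "0 < sin (\<theta> s\<^sub>0) * cos (\<theta> s\<^sub>0)"
        using assms(5,6) by (intro mult_pos_pos sin_gt_zero cos_gt_zero_pi) auto
      have al: "\<alpha> s\<^sub>0 = \<theta> s\<^sub>0 + pi / 2" using 2 unfolding u_def by simp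
      have "al' s\<^sub>0 - th' s\<^sub>0 = - (real p + real q + 3) * (sin (\<theta> s\<^sub>0) * cos (\<theta> s\<^sub>0))"
        unfolding al'_def th'_def al by (simp add: cos_add sin_add algebra_simps)
      also have "\<dots> < 0" using sc by (intro mult_neg_pos) auto
      finally obtain d2 where d2: "d2 > 0" "\<And>h. 0 < h \<Longrightarrow> h < d2 \<Longrightarrow> u (s\<^sub>0 + h) < u s\<^sub>0"
        using DERIV_neg_dec_right[OF du] by blast
      obtain d3 where d3: "d3 > 0" "\<And>h. 0 < h \<and> h < d3 \<Longrightarrow> - (pi / 2) < u (s\<^sub>0 + h) \<and> u (s\<^sub>0 + h) < pi"
        using near_right[OF cu, of "- (pi / 2)" s\<^sub>0 pi] 2 by auto
      define h where "h = min d1 (min d2 d3) / 2"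
      have h: "0 < h" "h < d1" "h < d2" "h < d3" using d1 d2 d3 by (auto simp: h_def)
      show ?thesis using that[of "s\<^sub>0 + h"] d1(2)[of h] d2(2)[of h] d3(2)[of h] h 2 by auto
    next
      case 3
      have sc: "0 < sin (\<theta> s\<^sub>0) * cos (\<theta> s\<^sub>0)"
        using assms(5,6) by (intro mult_pos_pos sin_gt_zero cos_gt_zero_pi) auto
      have al: "\<alpha> s\<^sub>0 = \<theta> s\<^sub>0 - pi / 2" using 3 unfolding u_def by simp
      have "0 < (real p + real q + 3) * (sin (\<theta> s\<^sub>0) * cos (\<theta> s\<^sub>0))"
        using sc by (rule mult_pos_pos[rotated]) auto
      also have "\<dots> = al' s\<^sub>0 - th' s\<^sub>0"
        unfolding al'_def th'_def al by (simp add: cos_diff sin_diff algebra_simps)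
      finally obtain d2 where d2: "d2 > 0" "\<And>h. 0 < h \<Longrightarrow> h < d2 \<Longrightarrow> u s\<^sub>0 < u (s\<^sub>0 + h)"
        using DERIV_pos_inc_right[OF du] by blast
      obtain d3 where d3: "d3 > 0" "\<And>h. 0 < h \<and> h < d3 \<Longrightarrow> - pi < u (s\<^sub>0 + h) \<and> u (s\<^sub>0 + h) < pi / 2"
        using near_right[OF cu, of "- pi" s\<^sub>0 "pi / 2"] 3 by auto
      define h where "h = min d1 (min d2 d3) / 2"
      have h: "0 < h" "h < d1" "h < d2" "h < d3" using d1 d2 d3 by (auto simp: h_def)
      show ?thesis using that[of "s\<^sub>0 + h"] d1(2)[of h] d2(2)[of h] d3(2)[of h] h 3 by auto
    qed
  qed
  have W'nn: "0 \<le> W' t" if "0 \<le> sin (\<theta> t)" "0 \<le> cos (\<theta> t)" for t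
    unfolding W'_def using that by (intro mult_nonneg_nonneg zero_le_power2 zero_le_power) auto
  have Wmono0: "W x \<le> W y" if "x \<le> y" "\<forall>z\<in>{x..y}. 0 \<le> \<theta> z \<and> \<theta> z \<le> pi / 2" for x y
  proof (rule DERIV_nonneg_imp_nondecreasing[OF that(1)])
    fix z assume z: "x \<le> z" "z \<le> y"
    then have tz: "0 \<le> \<theta> z" "\<theta> z \<le> pi / 2" using that(2) by auto
    then have "0 \<le> sin (\<theta> z)" "0 \<le> cos (\<theta> z)"
      by (auto intro!: sin_ge_zero cos_ge_zero)
    then show "\<exists>y. (W has_real_derivative y) (at z) \<and> 0 \<le> y" using dW W'nn by blast
  qed
  have Ws1: "0 < W s1" unfolding W_def
    using s1 unfolding u_def by (intro mult_pos_pos zero_less_power sin_gt_zero cos_gt_zero_pi) auto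
  have Wzero: "W t = 0" if "sin (\<theta> t) = 0 \<or> cos (\<theta> t) = 0 \<or> cos (u t) = 0" for t
    using that unfolding W_def u_def qa pb by auto
  have thin: "0 < \<theta> t \<and> \<theta> t < pi / 2" if "s1 \<le> t" for t
  proof (rule trap[OF cth s1(1) s1(2) _ that])
    fix t assume t: "s1 \<le> t" "\<forall>x\<in>{s1..t}. 0 \<le> \<theta> x \<and> \<theta> x \<le> pi / 2"
    have "W s1 \<le> W t" using Wmono0[OF t(1)] t(2) by auto
    then have "W t \<noteq> 0" using Ws1 by auto
    then have "sin (\<theta> t) \<noteq> 0" "cos (\<theta> t) \<noteq> 0" using Wzero by auto
    then have "\<theta> t \<noteq> 0" "\<theta> t \<noteq> pi / 2" by (metis sin_zero, metis cos_pi_half)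
    moreover have "0 \<le> \<theta> t" "\<theta> t \<le> pi / 2" using t by auto
    ultimately show "0 < \<theta> t \<and> \<theta> t < pi / 2" by linarith
  qed
  have Wmono: "W x \<le> W y" if "s1 \<le> x" "x \<le> y" for x y
    using Wmono0[OF that(2)] thin that by (auto simp: less_imp_le)
  have uin: "- (pi / 2) < u t \<and> u t < pi / 2" if "s1 \<le> t" for t
  proof (rule trap[OF cu s1(3) s1(4) _ that])
    fix t assume t: "s1 \<le> t" "\<forall>x\<in>{s1..t}. - (pi / 2) \<le> u x \<and> u x \<le> pi / 2"
    have "W s1 \<le> W t" using Wmono[OF order_refl t(1)] .
    then have "W t \<noteq> 0" using Ws1 by auto
    then have "cos (u t) \<noteq> 0" using Wzero by auto
    then have "u t \<noteq> - (pi / 2)" "u t \<noteq> pi / 2" by (metis cos_minus cos_pi_half, metis cos_pi_half)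
    moreover have "- (pi / 2) \<le> u t" "u t \<le> pi / 2" using t by auto
    ultimately show "- (pi / 2) < u t \<and> u t < pi / 2" by linarith
  qed
  define w1 where "w1 = W s1"
  have w1pos: "0 < w1" using Ws1 by (simp add: w1_def)
  have lower: "w1 \<le> sin (\<theta> t) \<and> w1 \<le> cos (\<theta> t) \<and> w1 \<le> cos (u t)" if "s1 \<le> t" for t
  proof -
    have "0 < sin (\<theta> t)" "0 < cos (\<theta> t)" using thin[OF that] by (auto intro!: sin_gt_zero cos_gt_zero_pi)
    moreover have "0 < cos (u t)" using uin[OF that] by (auto intro!: cos_gt_zero_pi)
    moreover have "w1 \<le> W t" using Wmono[OF order_refl that] by (simp add: w1_def)
    moreover have "W t = sin (\<theta> t) ^ Suc a * cos (\<theta> t) ^ Suc b * cos (u t) ^ 3"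
      unfolding W_def qa pb u_def ..
    ultimately show ?thesis
      using W_le[of "sin (\<theta> t)" "cos (\<theta> t)" "cos (u t)" a b, OF less_imp_le sin_le_one less_imp_le cos_le_one less_imp_le cos_le_one]
      by linarith
  qed
  have Wle1: "W t \<le> 1" for t
  proof -
    have "\<bar>W t\<bar> = \<bar>sin (\<theta> t)\<bar> ^ q * \<bar>cos (\<theta> t)\<bar> ^ p * \<bar>cos (\<alpha> t - \<theta> t)\<bar> ^ 3"
      unfolding W_def by (simp add: abs_mult power_abs)
    also have "\<dots> \<le> 1" by (intro mult_le_one power_le_one) auto
    finally show ?thesis by linarith
  qed
  obtain LW where LW: "(W \<longlongrightarrow> LW) at_top" using mono_conv[of s1 W 1] Wmono Wle1 by blast
  have W'0: "(W' \<longlongrightarrow> 0) at_top" by (rule barbalat[OF LW dW lW'])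
  define K where "K = 3 * (real p + real q + 3) * w1 ^ (q + 1) * w1 ^ (p + 1) * w1 ^ 2"
  have Kpos: "0 < K" unfolding K_def using w1pos by simp
  have KW': "K * sin (u t) ^ 2 \<le> W' t" if t: "s1 \<le> t" for t
  proof -
    note l = lower[OF t]
    have "3 * (real p + real q + 3) * w1 ^ (q + 1) * w1 ^ (p + 1) * sin (u t) ^ 2 * w1 ^ 2
      \<le> 3 * (real p + real q + 3) * sin (\<theta> t) ^ (q + 1) * cos (\<theta> t) ^ (p + 1) * sin (u t) ^ 2 * cos (u t) ^ 2"
      using l w1pos
      by (intro mult_mono power_mono order_refl mult_nonneg_nonneg zero_le_power zero_le_power2) auto
    then show ?thesis unfolding W'_def K_def u_def by (simp add: algebra_simps)
  qed
  have s2: "((\<lambda>t. sin (u t) ^ 2) \<longlongrightarrow> 0) at_top"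
  proof (rule tendsto_0_le[OF W'0, of _ "1 / K"])
    show "\<forall>\<^sub>F t in at_top. norm (sin (u t) ^ 2) \<le> norm (W' t) * (1 / K)"
      unfolding eventually_at_top_linorder
    proof (intro exI[of _ s1] allI impI)
      fix t assume t: "s1 \<le> t"
      have "sin (u t) ^ 2 \<le> W' t / K" using KW'[OF t] Kpos by (simp add: field_simps)
      moreover have "0 \<le> K * sin (u t) ^ 2" using Kpos by simp
      hence "0 \<le> W' t" using KW'[OF t] by linarith
      ultimately show "norm (sin (u t) ^ 2) \<le> norm (W' t) * (1 / K)" by simp
    qed
  qed
  have su: "((\<lambda>t. sin (u t)) \<longlongrightarrow> 0) at_top"
  proof -
    have "((\<lambda>t. sqrt (sin (u t) ^ 2)) \<longlongrightarrow> sqrt 0) at_top" by (rule tendsto_real_sqrt[OF s2])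
    then have "((\<lambda>t. \<bar>sin (u t)\<bar>) \<longlongrightarrow> 0) at_top" by simp
    then show ?thesis by (simp add: tendsto_rabs_zero_iff)
  qed
  have u0: "(u \<longlongrightarrow> 0) at_top"
  proof -
    have "((\<lambda>t. arcsin (sin (u t))) \<longlongrightarrow> arcsin 0) at_top"
      by (rule isCont_tendsto_compose[OF isCont_arcsin su]) auto
    moreover have "\<forall>\<^sub>F t in at_top. arcsin (sin (u t)) = u t"
      unfolding eventually_at_top_linorder using uin by (intro exI[of _ s1] allI impI arcsin_sin) (auto simp: less_imp_le)
    ultimately show ?thesis by (simp add: tendsto_cong)
  qed
  have du0: "((\<lambda>t. al' t - th' t) \<longlongrightarrow> 0) at_top" by (rule barbalat[OF u0 du lu'])
  have th0: "(th' \<longlongrightarrow> 0) at_top"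
  proof (rule tendsto_0_le[OF su, of _ 3])
    show "\<forall>\<^sub>F t in at_top. norm (th' t) \<le> norm (sin (u t)) * 3"
    proof (intro always_eventually allI)
      fix t
      have "\<bar>sin (\<theta> t)\<bar> * \<bar>cos (\<theta> t)\<bar> \<le> 1" by (intro mult_le_one) auto
      then have "\<bar>sin (\<theta> t)\<bar> * \<bar>cos (\<theta> t)\<bar> * \<bar>sin (u t)\<bar> \<le> 1 * \<bar>sin (u t)\<bar>" by (intro mult_right_mono) auto
      then show "norm (th' t) \<le> norm (sin (u t)) * 3" unfolding th'_def u_def by (simp add: abs_mult)
    qed
  qed
  have al0: "(al' \<longlongrightarrow> 0) at_top"
    using tendsto_add[OF du0 th0] by simp
  define D where "D t = real q * cos (\<theta> t) ^ 2 - real p * sin (\<theta> t) ^ 2" for t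
  have Dal: "((\<lambda>t. D t - al' t) \<longlongrightarrow> 0) at_top"
  proof (rule tendsto_0_le[OF u0, of _ "real q + real p"])
    show "\<forall>\<^sub>F t in at_top. norm (D t - al' t) \<le> norm (u t) * (real q + real p)"
    proof (intro always_eventually allI)
      fix t
      have e: "D t - al' t = real q * cos (\<theta> t) * (cos (\<theta> t) - cos (\<alpha> t)) - real p * sin (\<theta> t) * (sin (\<theta> t) - sin (\<alpha> t))"
        unfolding D_def al'_def by (simp add: algebra_simps power2_eq_square)
      have 1: "\<bar>real q * cos (\<theta> t) * (cos (\<theta> t) - cos (\<alpha> t))\<bar> \<le> real q * \<bar>u t\<bar>"
      proof -
        have "\<bar>cos (\<theta> t)\<bar> * \<bar>cos (\<theta> t) - cos (\<alpha> t)\<bar> \<le> 1 * \<bar>u t\<bar>"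
          using cos_lip[of "\<theta> t" "\<alpha> t"] unfolding u_def by (intro mult_mono) (auto simp: abs_minus_commute)
        then show ?thesis by (simp add: abs_mult mult.assoc mult_left_mono)
      qed
      have 2: "\<bar>real p * sin (\<theta> t) * (sin (\<theta> t) - sin (\<alpha> t))\<bar> \<le> real p * \<bar>u t\<bar>"
      proof -
        have "\<bar>sin (\<theta> t)\<bar> * \<bar>sin (\<theta> t) - sin (\<alpha> t)\<bar> \<le> 1 * \<bar>u t\<bar>"
          using sin_lip[of "\<theta> t" "\<alpha> t"] unfolding u_def by (intro mult_mono) (auto simp: abs_minus_commute)
        then show ?thesis by (simp add: abs_mult mult.assoc mult_left_mono)
      qed
      show "norm (D t - al' t) \<le> norm (u t) * (real q + real p)"
        using 1 2 unfolding e by (simp add: algebra_simps)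
    qed
  qed
  have D0: "(D \<longlongrightarrow> 0) at_top"
    using tendsto_add[OF Dal al0] by simp
  define x0 where "x0 = sqrt (real q / (real p + real q))"
  have s2th: "((\<lambda>t. sin (\<theta> t) ^ 2) \<longlongrightarrow> x0 ^ 2) at_top"
  proof -
    have "((\<lambda>t. (real q - D t) / (real p + real q)) \<longlongrightarrow> (real q - 0) / (real p + real q)) at_top"
      by (intro tendsto_intros D0) (use assms(1) in auto)
    moreover have "(real q - D t) / (real p + real q) = sin (\<theta> t) ^ 2" for t
    proof -
      have cs: "cos (\<theta> t) ^ 2 = 1 - sin (\<theta> t) ^ 2" by (simp add: cos_squared_eq)
      show ?thesis unfolding D_def cs using assms(1) by (simp add: field_simps algebra_simps)
    qed
    moreover have "x0 ^ 2 = real q / (real p + real q)" unfolding x0_def by simp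
    ultimately show ?thesis by simp
  qed
  have x0b: "0 \<le> x0" "x0 < 1"
  proof -
    show "0 \<le> x0" unfolding x0_def by simp
    have "real q / (real p + real q) < 1" using assms(1) by (simp add: field_simps)
    then show "x0 < 1" unfolding x0_def by simp
  qed
  have sth: "((\<lambda>t. sin (\<theta> t)) \<longlongrightarrow> x0) at_top"
  proof -
    have "((\<lambda>t. sqrt (sin (\<theta> t) ^ 2)) \<longlongrightarrow> sqrt (x0 ^ 2)) at_top" by (rule tendsto_real_sqrt[OF s2th])
    moreover have "\<forall>\<^sub>F t in at_top. sqrt (sin (\<theta> t) ^ 2) = sin (\<theta> t)"
      unfolding eventually_at_top_linorder
    proof (intro exI[of _ s1] allI impI)
      fix t assume "s1 \<le> t"
      then have "0 < \<theta> t" "\<theta> t < pi / 2" using thin by auto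
      then have "0 < sin (\<theta> t)" by (intro sin_gt_zero) auto
      then show "sqrt (sin (\<theta> t) ^ 2) = sin (\<theta> t)" by simp
    qed
    ultimately show ?thesis using x0b by (simp add: tendsto_cong)
  qed
  have thlim: "(\<theta> \<longlongrightarrow> arcsin x0) at_top"
  proof -
    have "((\<lambda>t. arcsin (sin (\<theta> t))) \<longlongrightarrow> arcsin x0) at_top"
      by (rule isCont_tendsto_compose[OF isCont_arcsin sth]) (use x0b in auto)
    moreover have "\<forall>\<^sub>F t in at_top. arcsin (sin (\<theta> t)) = \<theta> t"
      unfolding eventually_at_top_linorder
    proof (intro exI[of _ s1] allI impI)
      fix t assume "s1 \<le> t"
      then have "0 < \<theta> t" "\<theta> t < pi / 2" using thin by auto
      then show "arcsin (sin (\<theta> t)) = \<theta> t" by (intro arcsin_sin) auto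
    qed
    ultimately show ?thesis by (simp add: tendsto_cong)
  qed
  have alim: "(\<alpha> \<longlongrightarrow> arcsin x0) at_top"
    using tendsto_add[OF thlim u0] unfolding u_def by simp
  have eq: "arcsin x0 = arctan (sqrt (real q / real p))"
  proof -
    have "1 - x0 ^ 2 = real p / (real p + real q)"
      unfolding x0_def using assms(1) by (simp add: field_simps)
    then have "x0 / sqrt (1 - x0 ^ 2) = sqrt (real q / real p)"
      unfolding x0_def using assms(1) by (simp add: real_sqrt_divide field_simps)
    then show ?thesis using arcsin_arctan[of x0] x0b by simp
  qed
  show ?thesis using tendsto_Pair[OF thlim alim] unfolding eq .
qed
end
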